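(* Let $r\ge1$ and let $A,B$ be integers with $0\le B<A\le r$. For all real numbers $v_0,v_1,\dots,v_r$, $$\sum_{i=B}^{A}\ \prod_{\alpha=0}^{i-1}(v_A-v_\alpha)\prod_{\beta=i+1}^{r}(v_B-v_\beta)=0,$$ where an empty product (e.g. $\prod_{\alpha=0}^{-1}$ or $\prod_{\beta=r+1}^{r}$) equals $1$. *)

theory Defs
  imports Complex_Main
begin

end

theory Submission
  imports Defs
begin

lemma tele:
  fixes a b :: "nat \<Rightarrow> real"
  shows "(\<Sum>i<n. (\<Prod>\<alpha> = 0..<i. a \<alpha>) * (a i - b i) * (\<Prod>\<beta> = i+1..<n. b \<beta>))
         = (\<Prod>\<alpha> = 0..<n. a \<alpha>) - (\<Prod>\<beta> = 0..<n. b \<beta>)"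
proof (induction n)
  case 0
  then show ?case by simp
next
  case (Suc n)
  have e: "(\<Prod>\<beta> = i+1..<Suc n. b \<beta>) = (\<Prod>\<beta> = i+1..<n. b \<beta>) * b n" if "i < n" for i
    using that by (simp add: prod.atLeastLessThan_Suc)
  have "(\<Sum>i<Suc n. (\<Prod>\<alpha> = 0..<i. a \<alpha>) * (a i - b i) * (\<Prod>\<beta> = i+1..<Suc n. b \<beta>))
     = (\<Sum>i<n. (\<Prod>\<alpha> = 0..<i. a \<alpha>) * (a i - b i) * (\<Prod>\<beta> = i+1..<n. b \<beta>)) * b n
       + (\<Prod>\<alpha> = 0..<n. a \<alpha>) * (a n - b n)"
    by (simp add: e sum_distrib_right mult.assoc)
  also have "\<dots> = (\<Prod>\<alpha> = 0..<Suc n. a \<alpha>) - (\<Prod>\<beta> = 0..<Suc n. b \<beta>)"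
    by (subst Suc.IH) (simp add: prod.atLeastLessThan_Suc algebra_simps)
  finally show ?case .
qed

theorem mainTheorem3:
  fixes r A B :: nat and v :: "nat \<Rightarrow> real"
  assumes "r \<ge> 1" and "B < A" and "A \<le> r"
  shows "(\<Sum>i = B..A. (\<Prod>\<alpha> = 0..<i. v A - v \<alpha>) * (\<Prod>\<beta> = i+1..r. v B - v \<beta>)) = 0"
proof (cases "v A = v B")
  case True
  have "(\<Prod>\<alpha> = 0..<i. v A - v \<alpha>) * (\<Prod>\<beta> = i+1..r. v B - v \<beta>) = 0" if "i \<in> {B..A}" for i
  proof (cases "i = B")
    case True
    have "A \<in> {i+1..r}" using True assms by auto
    then have "(\<Prod>\<beta> = i+1..r. v B - v \<beta>) = 0"
      using \<open>v A = v B\<close> by (intro prod_zero) (auto intro!: bexI[of _ A])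
    then show ?thesis by simp
  next
    case False
    have "B \<in> {0..<i}" using False that by auto
    then have "(\<Prod>\<alpha> = 0..<i. v A - v \<alpha>) = 0"
      using \<open>v A = v B\<close> by (intro prod_zero) auto
    then show ?thesis by simp
  qed
  then show ?thesis by (intro sum.neutral) blast
next
  case False
  define f where "f i = (\<Prod>\<alpha> = 0..<i. v A - v \<alpha>) * (\<Prod>\<beta> = i+1..r. v B - v \<beta>)" for i
  have z: "f i = 0" if "i \<le> r" "i \<notin> {B..A}" for i
  proof (cases "i < B")
    case True
    have "B \<in> {i+1..r}" using True assms by auto
    then have "(\<Prod>\<beta> = i+1..r. v B - v \<beta>) = 0"
      by (intro prod_zero) auto
    then show ?thesis by (simp add: f_def)
  next
    case False
    then have "A \<in> {0..<i}" using that by auto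
    then have "(\<Prod>\<alpha> = 0..<i. v A - v \<alpha>) = 0"
      by (intro prod_zero) auto
    then show ?thesis by (simp add: f_def)
  qed
  have sub: "{B..A} \<subseteq> {..<Suc r}" using assms by auto
  have "sum f {B..A} = sum f {..<Suc r}"
    by (rule sum.mono_neutral_left) (use sub z in auto)
  also have "(v A - v B) * \<dots> = (\<Sum>i<Suc r. (\<Prod>\<alpha> = 0..<i. v A - v \<alpha>) * ((v A - v i) - (v B - v i)) * (\<Prod>\<beta> = i+1..<Suc r. v B - v \<beta>))"
    unfolding f_def sum_distrib_left
    by (rule sum.cong) (auto simp: atLeastLessThanSuc_atLeastAtMost)
  also have "\<dots> = (\<Prod>\<alpha> = 0..<Suc r. v A - v \<alpha>) - (\<Prod>\<beta> = 0..<Suc r. v B - v \<beta>)"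
    by (rule tele)
  also have "\<dots> = 0"
  proof -
    have h1: "(\<Prod>\<alpha> = 0..<Suc r. v A - v \<alpha>) = 0" using assms
      by (intro prod_zero) (auto simp del: prod.op_ivl_Suc intro!: bexI[of _ A])
    have h2: "(\<Prod>\<alpha> = 0..<Suc r. v B - v \<alpha>) = 0" using assms
      by (intro prod_zero) (auto simp del: prod.op_ivl_Suc intro!: bexI[of _ B])
    show ?thesis unfolding h1 h2 by simp
  qed
  finally have "sum f {B..A} = 0" using False by simp
  then show ?thesis by (simp add: f_def)
qed

end
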